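(* Let $\mathcal{M}=\{\mathcal{M}_o\}$ be a noisy $n$-qudit instrument that is applied every time a computational-basis measurement is performed. Assume all Weyl gates are implemented ideally. Run the following routine with initial state $\rho$ and sequence length $m\ge 1$: - Set $\alpha_0=0$. - For $i=1,\dots,m$: choose $\alpha_i,\beta_i\in\mathbb{Z}_d^n$ uniformly and independently at random; apply the gate $Z^{\beta_i}X^{\alpha_{i-1}-\alpha_i}$; measure with $\mathcal{M}$, obtaining outcome $o_i$; set $k_i=\alpha_i+o_i$. - Return $\vec k=(k_1,\dots,k_m)$. Then for every $\vec k\in(\mathbb{Z}_d^n)^m$, the probability that the routine returns $\vec k$ is $$\Pr(\vec k)=\operatorname{tr}\big(\hat{\mathcal{M}}_{k_m}\circ\cdots\circ\hat{\mathcal{M}}_{k_1}(\rho)\big),$$ where $\hat{\mathcal{M}}$ is the randomly compiled version of $\mathcal{M}$.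
   Context: Let $d,n$ be positive integers, with arithmetic on $\mathbb{Z}_d^n$ modulo $d$. Let $X^x=\sum_j|j+x\rangle\langle j|$ and $Z^z=\sum_j e^{2\pi i z\cdot j/d}|j\rangle\langle j|$. For an operator $A$, $\mathcal{A}(\rho)=A\rho A^\dagger$. An instrument $\{\mathcal{M}_o\}_{o\in\mathbb{Z}_d^n}$ is a family of completely positive trace-non-increasing maps summing to a trace-preserving map. Measuring a state $\sigma$ with it yields outcome $o$ with probability $\operatorname{tr}\mathcal{M}_o(\sigma)$ and post-measurement state $\mathcal{M}_o(\sigma)/\operatorname{tr}\mathcal{M}_o(\sigma)$. The randomly compiled version of $\mathcal{M}$ is $$\hat{\mathcal{M}}_k=d^{-3n}\sum_{a,b,x}\mathcal{X}^{x}\circ\mathcal{Z}^{a}\circ\mathcal{M}_{k-x}\circ\mathcal{Z}^{b}\circ\mathcal{X}^{-x}.$$ *)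

theory Defs
  imports Complex_Main
begin

text \<open>Operators on the d^n-dimensional Hilbert space spanned by the basis kets |j>, j in Z_d^n,
  are represented by their matrix entries, as functions of (row index, column index).\<close>

type_synonym op = "nat list \<Rightarrow> nat list \<Rightarrow> complex"

definition Zdn :: "nat \<Rightarrow> nat \<Rightarrow> nat list set" where
  "Zdn d n = {j. length j = n \<and> (\<forall>a\<in>set j. a < d)}"

definition vzero :: "nat \<Rightarrow> nat list" where
  "vzero n = replicate n 0"

definition vadd :: "nat \<Rightarrow> nat list \<Rightarrow> nat list \<Rightarrow> nat list" where
  "vadd d x y = map2 (\<lambda>a b. (a + b) mod d) x y"

definition vneg :: "nat \<Rightarrow> nat list \<Rightarrow> nat list" where
  "vneg d x = map (\<lambda>a. (d - a mod d) mod d) x"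

definition vsub :: "nat \<Rightarrow> nat list \<Rightarrow> nat list \<Rightarrow> nat list" where
  "vsub d x y = vadd d x (vneg d y)"

definition vdot :: "nat list \<Rightarrow> nat list \<Rightarrow> nat" where
  "vdot z j = sum_list (map2 (*) z j)"

definition omul :: "nat \<Rightarrow> nat \<Rightarrow> op \<Rightarrow> op \<Rightarrow> op" where
  "omul d n A B = (\<lambda>i k. \<Sum>j\<in>Zdn d n. A i j * B j k)"

definition oadj :: "op \<Rightarrow> op" where
  "oadj A = (\<lambda>i j. cnj (A j i))"

definition otr :: "nat \<Rightarrow> nat \<Rightarrow> op \<Rightarrow> complex" where
  "otr d n A = (\<Sum>j\<in>Zdn d n. A j j)"

definition oscale :: "complex \<Rightarrow> op \<Rightarrow> op" where
  "oscale c A = (\<lambda>i j. c * A i j)"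

definition conjop :: "nat \<Rightarrow> nat \<Rightarrow> op \<Rightarrow> op \<Rightarrow> op" where
  "conjop d n A \<rho> = omul d n (omul d n A \<rho>) (oadj A)"

definition Xop :: "nat \<Rightarrow> nat \<Rightarrow> nat list \<Rightarrow> op" where
  "Xop d n x = (\<lambda>i j. if i \<in> Zdn d n \<and> j \<in> Zdn d n \<and> i = vadd d j x then 1 else 0)"

definition Zop :: "nat \<Rightarrow> nat \<Rightarrow> nat list \<Rightarrow> op" where
  "Zop d n z = (\<lambda>i j. if i \<in> Zdn d n \<and> i = j
                       then cis (2 * pi * real (vdot z j) / real d) else 0)"

definition density :: "nat \<Rightarrow> nat \<Rightarrow> op \<Rightarrow> bool" where
  "density d n \<rho> \<longleftrightarrow>
     (\<forall>v :: nat list \<Rightarrow> complex.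
        (\<Sum>i\<in>Zdn d n. \<Sum>j\<in>Zdn d n. cnj (v i) * \<rho> i j * v j) \<in> \<real> \<and>
        0 \<le> Re (\<Sum>i\<in>Zdn d n. \<Sum>j\<in>Zdn d n. cnj (v i) * \<rho> i j * v j))
     \<and> otr d n \<rho> = 1"

definition instrument :: "nat \<Rightarrow> nat \<Rightarrow> (nat list \<Rightarrow> op \<Rightarrow> op) \<Rightarrow> bool" where
  "instrument d n M \<longleftrightarrow>
     (\<forall>u\<in>Zdn d n. \<exists>Ks :: op list.
        \<forall>\<sigma>. M u \<sigma> = (\<lambda>i j. \<Sum>A\<leftarrow>Ks. conjop d n A \<sigma> i j))
     \<and> (\<forall>\<sigma>. (\<Sum>u\<in>Zdn d n. otr d n (M u \<sigma>)) = otr d n \<sigma>)"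

definition Mhat :: "nat \<Rightarrow> nat \<Rightarrow> (nat list \<Rightarrow> op \<Rightarrow> op) \<Rightarrow> nat list \<Rightarrow> op \<Rightarrow> op" where
  "Mhat d n M k \<sigma> =
     oscale (1 / (of_nat d) ^ (3 * n))
       (\<lambda>r c. \<Sum>a\<in>Zdn d n. \<Sum>b\<in>Zdn d n. \<Sum>x\<in>Zdn d n.
          conjop d n (Xop d n x)
            (conjop d n (Zop d n a)
              (M (vsub d k x)
                (conjop d n (Zop d n b)
                  (conjop d n (Xop d n (vneg d x)) \<sigma>)))) r c)"

text \<open>Probability of observing the outcome sequence os when, starting in state \<sigma> with
  previous shift a_prev, the gates Z^{b_i} X^{a_{i-1} - a_i} are applied, each followed by a
  measurement with M (post-measurement state renormalised).\<close>

fun seqprob :: "nat \<Rightarrow> nat \<Rightarrow> (nat list \<Rightarrow> op \<Rightarrow> op) \<Rightarrow> op \<Rightarrow> nat list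
                 \<Rightarrow> nat list list \<Rightarrow> nat list list \<Rightarrow> nat list list \<Rightarrow> complex" where
  "seqprob d n M \<sigma> ap [] [] [] = 1"
| "seqprob d n M \<sigma> ap (a # as) (b # bs) (u # os) =
     (let G = omul d n (Zop d n b) (Xop d n (vsub d ap a));
          \<mu> = M u (conjop d n G \<sigma>);
          p = otr d n \<mu>
      in p * seqprob d n M (oscale (1 / p) \<mu>) a as bs os)"
| "seqprob d n M \<sigma> ap _ _ _ = 0"

definition seqs :: "nat \<Rightarrow> nat \<Rightarrow> nat \<Rightarrow> nat list list set" where
  "seqs d n m = {xs. length xs = m \<and> set xs \<subseteq> Zdn d n}"

text \<open>Probability that the routine returns ks: alpha_i, beta_i uniform and independent on
  Z_d^n, alpha_0 = 0, k_i = alpha_i + o_i.\<close>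

definition routine_prob :: "nat \<Rightarrow> nat \<Rightarrow> (nat list \<Rightarrow> op \<Rightarrow> op) \<Rightarrow> op \<Rightarrow> nat
                             \<Rightarrow> nat list list \<Rightarrow> complex" where
  "routine_prob d n M \<rho> m ks =
     (\<Sum>\<alpha>\<in>seqs d n m. \<Sum>\<beta>\<in>seqs d n m. \<Sum>os\<in>seqs d n m.
        if map2 (vadd d) \<alpha> os = ks
        then (1 / (of_nat d) ^ (2 * n)) ^ m * seqprob d n M \<rho> (vzero n) \<alpha> \<beta> os
        else 0)"

end

theory Submission
  imports Defs
begin


lemma aux1: "((b + (x::nat) mod d) mod d + c) mod d = (b + x + c) mod d"
  by (metis mod_add_eq mod_add_left_eq)

lemma mod_neg_cancel: "0 < (d::nat) \<Longrightarrow> b < d \<Longrightarrow> ((b + c) mod d + (d - c mod d) mod d) mod d = b"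
proof -
  assume d: "0 < d" and b: "b < d"
  have "((b + c) mod d + (d - c mod d) mod d) mod d = (b + c + (d - c mod d)) mod d"
    by (simp add: mod_add_eq)
  also have "b + c + (d - c mod d) = b + d * (c div d) + d"
  proof -
      have "c = d * (c div d) + c mod d" by simp
      moreover have "c mod d < d" using d by simp
      ultimately show ?thesis by linarith
    qed
  also have "(b + d * (c div d) + d) mod d = b" using b by simp
  finally show ?thesis .
qed

lemma mod_neg_cancel2: "0 < (d::nat) \<Longrightarrow> b < d \<Longrightarrow> ((b + (d - c mod d) mod d) mod d + c) mod d = b"
proof -
  assume d: "0 < d" and b: "b < d"
  have "((b + (d - c mod d) mod d) mod d + c) mod d = (b + (d - c mod d) + c) mod d"
    by (rule aux1)
  also have "b + (d - c mod d) + c = b + d * (c div d) + d"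
  proof -
      have "c = d * (c div d) + c mod d" by simp
      moreover have "c mod d < d" using d by simp
      ultimately show ?thesis by linarith
    qed
  also have "(b + d * (c div d) + d) mod d = b" using b by simp
  finally show ?thesis .
qed

lemma mod_add_cancel_right: "b < (d::nat) \<Longrightarrow> c < d \<Longrightarrow> (b + a) mod d = (c + a) mod d \<Longrightarrow> b = c"
  by (metis mod_neg_cancel gr_zeroI less_zeroE)

lemma mod_add_assoc3: "((a + b) mod d + c) mod d = (a + (b + c) mod d) mod (d::nat)"
  by presburger

lemma Zdn_iff: "j \<in> Zdn d n \<longleftrightarrow> length j = n \<and> (\<forall>i<n. j ! i < d)"
  unfolding Zdn_def by (auto simp: all_set_conv_all_nth)

lemma finite_Zdn: "finite (Zdn d n)"
proof -
  have "Zdn d n = {xs. set xs \<subseteq> {..<d} \<and> length xs = n}" unfolding Zdn_def by auto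
  thus ?thesis by (simp add: finite_lists_length_eq)
qed

lemma card_Zdn: "card (Zdn d n) = d ^ n"
proof -
  have "Zdn d n = {xs. set xs \<subseteq> {..<d} \<and> length xs = n}" unfolding Zdn_def by auto
  thus ?thesis by (simp add: card_lists_length_eq)
qed

lemma vadd_len[simp]: "length (vadd d x y) = min (length x) (length y)"
  by (simp add: vadd_def)
lemma vadd_nth[simp]: "i < length x \<Longrightarrow> i < length y \<Longrightarrow> vadd d x y ! i = (x!i + y!i) mod d"
  by (simp add: vadd_def)
lemma vneg_len[simp]: "length (vneg d x) = length x"
  by (simp add: vneg_def)
lemma vneg_nth[simp]: "i < length x \<Longrightarrow> vneg d x ! i = (d - x!i mod d) mod d"
  by (simp add: vneg_def)

lemma vadd_Zdn: "0 < d \<Longrightarrow> length x = n \<Longrightarrow> length y = n \<Longrightarrow> vadd d x y \<in> Zdn d n"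
  by (simp add: Zdn_iff)
lemma vneg_Zdn: "0 < d \<Longrightarrow> length x = n \<Longrightarrow> vneg d x \<in> Zdn d n"
  by (simp add: Zdn_iff)
lemma vsub_Zdn: "0 < d \<Longrightarrow> length x = n \<Longrightarrow> length y = n \<Longrightarrow> vsub d x y \<in> Zdn d n"
  by (simp add: Zdn_iff vsub_def)
lemma Zdn_len: "x \<in> Zdn d n \<Longrightarrow> length x = n"
  by (simp add: Zdn_iff)

lemma vadd_assoc: "length x = n \<Longrightarrow> length y = n \<Longrightarrow> length z = n \<Longrightarrow>
   vadd d (vadd d x y) z = vadd d x (vadd d y z)"
  by (rule nth_equalityI) (simp_all add: mod_add_assoc3)

lemma vadd_comm: "vadd d x y = vadd d y x"
  by (rule nth_equalityI) (simp_all add: add.commute)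

lemma vadd_vneg_cancel: "x \<in> Zdn d n \<Longrightarrow> length y = n \<Longrightarrow> vadd d (vadd d x (vneg d y)) y = x"
  by (rule nth_equalityI) (auto simp: Zdn_iff mod_neg_cancel2)

lemma vadd_vneg_cancel2: "x \<in> Zdn d n \<Longrightarrow> length y = n \<Longrightarrow> vadd d (vadd d x y) (vneg d y) = x"
  by (rule nth_equalityI) (auto simp: Zdn_iff mod_neg_cancel)

lemma vzero_add: "y \<in> Zdn d n \<Longrightarrow> vadd d (vzero n) y = y"
  by (rule nth_equalityI) (auto simp: Zdn_iff vzero_def)

lemma vzero_Zdn: "0 < d \<Longrightarrow> vzero n \<in> Zdn d n"
  by (simp add: Zdn_iff vzero_def)

lemma vadd_inj: "x \<in> Zdn d n \<Longrightarrow> x' \<in> Zdn d n \<Longrightarrow> length y = n \<Longrightarrow> vadd d x y = vadd d x' y \<Longrightarrow> x = x'"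
  by (metis vadd_vneg_cancel2)

lemma vadd_bij: "0 < d \<Longrightarrow> length c = n \<Longrightarrow> bij_betw (\<lambda>b. vadd d b c) (Zdn d n) (Zdn d n)"
proof (rule bij_betw_imageI)
  assume d: "0 < d" and c: "length c = n"
  show "inj_on (\<lambda>b. vadd d b c) (Zdn d n)"
    using c by (auto intro: inj_onI dest: vadd_inj)
  show "(\<lambda>b. vadd d b c) ` Zdn d n = Zdn d n"
  proof
    show "(\<lambda>b. vadd d b c) ` Zdn d n \<subseteq> Zdn d n" using d c by (auto intro!: vadd_Zdn dest: Zdn_len)
    show "Zdn d n \<subseteq> (\<lambda>b. vadd d b c) ` Zdn d n"
    proof
      fix x assume x: "x \<in> Zdn d n"
      have "x = vadd d (vadd d x (vneg d c)) c" using vadd_vneg_cancel[OF x c] by simp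
      moreover have "vadd d x (vneg d c) \<in> Zdn d n" using d c x by (auto intro!: vadd_Zdn dest: Zdn_len)
      ultimately show "x \<in> (\<lambda>b. vadd d b c) ` Zdn d n" by blast
    qed
  qed
qed

lemma vadd_solve: "0 < d \<Longrightarrow> a \<in> Zdn d n \<Longrightarrow> u \<in> Zdn d n \<Longrightarrow> k \<in> Zdn d n \<Longrightarrow>
   vadd d a u = k \<longleftrightarrow> u = vsub d k a"
  unfolding vsub_def by (metis Zdn_len vadd_comm vadd_vneg_cancel vadd_vneg_cancel2)

lemma sum_vadd_solve: "0 < d \<Longrightarrow> a \<in> Zdn d n \<Longrightarrow> k \<in> Zdn d n \<Longrightarrow>
   (\<Sum>u\<in>Zdn d n. if vadd d a u = k then f u else 0) = f (vsub d k a)"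
proof -
  assume d: "0 < d" and a: "a \<in> Zdn d n" and k: "k \<in> Zdn d n"
  have "(\<Sum>u\<in>Zdn d n. if vadd d a u = k then f u else 0) = (\<Sum>u\<in>Zdn d n. if u = vsub d k a then f u else 0)"
    by (rule sum.cong) (use d a k vadd_solve in auto)
  also have "\<dots> = f (vsub d k a)" using vsub_Zdn[OF d Zdn_len[OF k] Zdn_len[OF a]]
    by (simp add: finite_Zdn)
  finally show ?thesis .
qed



definition om :: "nat \<Rightarrow> nat \<Rightarrow> complex" where "om d v = cis (2 * pi * real v / real d)"

lemma Zop_om: "Zop d n z = (\<lambda>i j. if i \<in> Zdn d n \<and> i = j then om d (vdot z j) else 0)"
  unfolding Zop_def om_def by (rule refl)

lemma om_add: "om d (a + b) = om d a * om d b"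
  by (simp add: om_def cis_mult add_divide_distrib distrib_left)

lemma om_mult_d: "0 < d \<Longrightarrow> om d (d * q) = 1"
proof -
  assume d: "0 < d"
  have "2 * pi * real (d * q) / real d = 2 * pi * real q" using d by simp
  thus ?thesis unfolding om_def by (simp add: cis_multiple_2pi)
qed

lemma om_mod: "0 < d \<Longrightarrow> om d (a mod d) = om d a"
proof -
  assume d: "0 < d"
  have "om d a = om d (a mod d + d * (a div d))" by simp
  also have "\<dots> = om d (a mod d) * om d (d * (a div d))" by (rule om_add)
  also have "\<dots> = om d (a mod d)" using om_mult_d[OF d] by simp
  finally show ?thesis by simp
qed

lemma om_cong: "0 < d \<Longrightarrow> a mod d = b mod d \<Longrightarrow> om d a = om d b"
  by (metis om_mod)

lemma om_cnj: "om d a * cnj (om d a) = 1"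
  by (simp add: om_def cis_cnj cis_mult)

lemma vdot_Cons[simp]: "vdot (c # cs) (k # ks) = c * k + vdot cs ks"
  by (simp add: vdot_def)
lemma vdot_Nil[simp]: "vdot [] ks = 0" "vdot cs [] = 0"
  by (simp_all add: vdot_def)

lemma vadd_Cons[simp]: "vadd d (x # xs) (y # ys) = ((x + y) mod d) # vadd d xs ys"
  by (simp add: vadd_def)
lemma vadd_Nil[simp]: "vadd d [] ys = []" "vadd d xs [] = []"
  by (simp_all add: vadd_def)

lemma aux_mod1: "(c * ((k + y) mod d) + V) mod d = (c * k + c * y + V mod (d::nat)) mod d"
  by (metis (no_types, lifting) distrib_left mod_add_eq mod_add_left_eq mod_mult_right_eq)

lemma vdot_vadd_right: "length k = length c \<Longrightarrow> length y = length c \<Longrightarrow>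
  vdot c (vadd d k y) mod d = (vdot c k + vdot c y) mod d"
proof (induction c arbitrary: k y)
  case Nil thus ?case by simp
next
  case (Cons c cs)
  then obtain k1 ks y1 ys where k: "k = k1 # ks" and y: "y = y1 # ys" and
    l: "length ks = length cs" "length ys = length cs"
    by (metis length_Suc_conv)
  have "vdot (c # cs) (vadd d k y) mod d = (c * ((k1 + y1) mod d) + vdot cs (vadd d ks ys)) mod d"
    by (simp add: k y)
  also have "\<dots> = (c * k1 + c * y1 + vdot cs (vadd d ks ys) mod d) mod d" by (rule aux_mod1)
  also have "\<dots> = (c * k1 + c * y1 + (vdot cs ks + vdot cs ys) mod d) mod d" using Cons.IH[OF l] by simp
  also have "\<dots> = (c * k1 + c * y1 + (vdot cs ks + vdot cs ys)) mod d" by (rule mod_add_right_eq)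
  also have "\<dots> = (vdot (c # cs) k + vdot (c # cs) y) mod d"
    by (simp add: k y add_ac)
  finally show ?case .
qed

lemma om_vdot_vadd_right: "0 < d \<Longrightarrow> length k = length c \<Longrightarrow> length y = length c \<Longrightarrow>
  om d (vdot c (vadd d k y)) = om d (vdot c k) * om d (vdot c y)"
  by (metis om_cong vdot_vadd_right om_add)

lemma vdot_comm: "vdot a b = vdot b a"
proof (induction a arbitrary: b)
  case Nil thus ?case by simp
next
  case (Cons x xs) thus ?case by (cases b) simp_all
qed

lemma om_vdot_vadd_left: "0 < d \<Longrightarrow> length b = length j \<Longrightarrow> length c = length j \<Longrightarrow>
  om d (vdot (vadd d b c) j) = om d (vdot b j) * om d (vdot c j)"
  by (metis om_vdot_vadd_right vdot_comm)



lemma omul_assoc: "omul d n A (omul d n B C) = omul d n (omul d n A B) C"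
proof (rule ext, rule ext)
  fix i k
  let ?Z = "Zdn d n"
  have "omul d n A (omul d n B C) i k = (\<Sum>j\<in>?Z. \<Sum>l\<in>?Z. A i j * B j l * C l k)"
    by (simp add: omul_def sum_distrib_left mult.assoc)
  also have "\<dots> = (\<Sum>l\<in>?Z. \<Sum>j\<in>?Z. A i j * B j l * C l k)" by (rule sum.swap)
  also have "\<dots> = omul d n (omul d n A B) C i k" by (simp add: omul_def sum_distrib_right)
  finally show "omul d n A (omul d n B C) i k = omul d n (omul d n A B) C i k" .
qed

lemma oadj_omul: "oadj (omul d n A B) = omul d n (oadj B) (oadj A)"
  by (simp add: oadj_def omul_def fun_eq_iff mult.commute)

lemma conjop_conjop: "conjop d n A (conjop d n B \<sigma>) = conjop d n (omul d n A B) \<sigma>"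
  by (simp add: conjop_def oadj_omul omul_assoc)

lemma conjop_oscale_op: "conjop d n (oscale c A) \<sigma> = oscale (c * cnj c) (conjop d n A \<sigma>)"
  by (simp add: conjop_def omul_def oscale_def oadj_def fun_eq_iff sum_distrib_left sum_distrib_right mult_ac)

lemma oscale_1[simp]: "oscale 1 A = A"
  by (simp add: oscale_def)

lemma otr_omul_comm: "otr d n (omul d n A B) = otr d n (omul d n B A)"
  unfolding otr_def omul_def
  by (subst sum.swap) (simp add: mult.commute)

definition Iop :: "nat \<Rightarrow> nat \<Rightarrow> op" where
  "Iop d n = (\<lambda>i j. if i \<in> Zdn d n \<and> i = j then 1 else 0)"

lemma otr_Iop: "otr d n (omul d n (Iop d n) \<sigma>) = otr d n \<sigma>"
proof -
  have "\<And>j. j \<in> Zdn d n \<Longrightarrow> omul d n (Iop d n) \<sigma> j j = \<sigma> j j"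
  proof -
    fix j assume j: "j \<in> Zdn d n"
    have "omul d n (Iop d n) \<sigma> j j = (\<Sum>l\<in>Zdn d n. if j = l then \<sigma> l j else 0)"
      unfolding omul_def Iop_def using j by (rule_tac sum.cong) auto
    thus "omul d n (Iop d n) \<sigma> j j = \<sigma> j j" using j by (simp add: finite_Zdn)
  qed
  thus ?thesis unfolding otr_def by simp
qed

lemma otr_conjop_unitary: "omul d n (oadj U) U = Iop d n \<Longrightarrow> otr d n (conjop d n U \<sigma>) = otr d n \<sigma>"
proof -
  assume u: "omul d n (oadj U) U = Iop d n"
  have "otr d n (conjop d n U \<sigma>) = otr d n (omul d n (oadj U) (omul d n U \<sigma>))"
    unfolding conjop_def by (rule otr_omul_comm)
  also have "\<dots> = otr d n (omul d n (Iop d n) \<sigma>)" by (simp add: omul_assoc u)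
  finally show ?thesis by (simp add: otr_Iop)
qed

lemma X_unitary: "0 < d \<Longrightarrow> length y = n \<Longrightarrow> omul d n (oadj (Xop d n y)) (Xop d n y) = Iop d n"
proof (rule ext, rule ext)
  fix i k
  assume d: "0 < d" and y: "length y = n"
  let ?Z = "Zdn d n"
  have "omul d n (oadj (Xop d n y)) (Xop d n y) i k =
    (\<Sum>j\<in>?Z. if j = vadd d i y then (if i \<in> ?Z \<and> k \<in> ?Z \<and> vadd d i y = vadd d k y then 1 else 0) else 0)"
    unfolding omul_def oadj_def Xop_def by (rule sum.cong) auto
  also have "\<dots> = Iop d n i k"
    using d y by (auto simp: finite_Zdn Iop_def dest: Zdn_len vadd_inj intro: vadd_Zdn)
  finally show "omul d n (oadj (Xop d n y)) (Xop d n y) i k = Iop d n i k" .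
qed

lemma Z_unitary: "omul d n (oadj (Zop d n c)) (Zop d n c) = Iop d n"
proof (rule ext, rule ext)
  fix i k
  let ?Z = "Zdn d n"
  have "omul d n (oadj (Zop d n c)) (Zop d n c) i k =
    (\<Sum>j\<in>?Z. if j = i then (if i \<in> ?Z \<and> i = k then cnj (om d (vdot c i)) * om d (vdot c i) else 0) else 0)"
    unfolding omul_def oadj_def Zop_om by (rule sum.cong) auto
  also have "\<dots> = Iop d n i k"
    by (auto simp: finite_Zdn Iop_def om_cnj mult.commute)
  finally show "omul d n (oadj (Zop d n c)) (Zop d n c) i k = Iop d n i k" .
qed

lemma otr_conj_X: "0 < d \<Longrightarrow> length y = n \<Longrightarrow> otr d n (conjop d n (Xop d n y) \<sigma>) = otr d n \<sigma>"
  by (simp add: X_unitary otr_conjop_unitary)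

lemma otr_conj_Z: "otr d n (conjop d n (Zop d n c) \<sigma>) = otr d n \<sigma>"
  by (simp add: Z_unitary otr_conjop_unitary)

lemma omul_XX: "0 < d \<Longrightarrow> length a = n \<Longrightarrow> length b = n \<Longrightarrow>
   omul d n (Xop d n a) (Xop d n b) = Xop d n (vadd d b a)"
proof (rule ext, rule ext)
  fix i k
  assume d: "0 < d" and a: "length a = n" and b: "length b = n"
  let ?Z = "Zdn d n"
  have "omul d n (Xop d n a) (Xop d n b) i k =
    (\<Sum>j\<in>?Z. if j = vadd d k b then (if i \<in> ?Z \<and> k \<in> ?Z \<and> i = vadd d (vadd d k b) a then 1 else 0) else 0)"
    unfolding omul_def Xop_def by (rule sum.cong) auto
  also have "\<dots> = Xop d n (vadd d b a) i k"
    using d a b by (auto simp: finite_Zdn Xop_def vadd_assoc dest: Zdn_len intro: vadd_Zdn)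
  finally show "omul d n (Xop d n a) (Xop d n b) i k = Xop d n (vadd d b a) i k" .
qed

lemma omul_ZZ: "0 < d \<Longrightarrow> length b = n \<Longrightarrow> length c = n \<Longrightarrow>
   omul d n (Zop d n b) (Zop d n c) = Zop d n (vadd d b c)"
proof (rule ext, rule ext)
  fix i k
  assume d: "0 < d" and b: "length b = n" and c: "length c = n"
  let ?Z = "Zdn d n"
  have "omul d n (Zop d n b) (Zop d n c) i k =
    (\<Sum>j\<in>?Z. if j = i then (if i \<in> ?Z \<and> i = k then om d (vdot b k) * om d (vdot c k) else 0) else 0)"
    unfolding omul_def Zop_om by (rule sum.cong) auto
  also have "\<dots> = Zop d n (vadd d b c) i k"
    using d b c by (auto simp: finite_Zdn Zop_om om_vdot_vadd_left dest: Zdn_len)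
  finally show "omul d n (Zop d n b) (Zop d n c) i k = Zop d n (vadd d b c) i k" .
qed

lemma omul_XZ: "omul d n (Xop d n y) (Zop d n c) =
   (\<lambda>i k. if i \<in> Zdn d n \<and> k \<in> Zdn d n \<and> i = vadd d k y then om d (vdot c k) else 0)"
proof (rule ext, rule ext)
  fix i k
  let ?Z = "Zdn d n"
  have "omul d n (Xop d n y) (Zop d n c) i k =
    (\<Sum>j\<in>?Z. if j = k then (if i \<in> ?Z \<and> k \<in> ?Z \<and> i = vadd d k y then om d (vdot c k) else 0) else 0)"
    unfolding omul_def Zop_om Xop_def by (rule sum.cong) auto
  thus "omul d n (Xop d n y) (Zop d n c) i k =
     (if i \<in> Zdn d n \<and> k \<in> Zdn d n \<and> i = vadd d k y then om d (vdot c k) else 0)"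
    by (auto simp: finite_Zdn)
qed

lemma omul_ZX: "0 < d \<Longrightarrow> length y = n \<Longrightarrow> length c = n \<Longrightarrow>
  omul d n (Zop d n c) (Xop d n y) = oscale (om d (vdot c y)) (omul d n (Xop d n y) (Zop d n c))"
proof (rule ext, rule ext)
  fix i k
  assume d: "0 < d" and y: "length y = n" and c: "length c = n"
  let ?Z = "Zdn d n"
  have "omul d n (Zop d n c) (Xop d n y) i k =
    (\<Sum>j\<in>?Z. if j = i then (if i \<in> ?Z \<and> k \<in> ?Z \<and> i = vadd d k y then om d (vdot c i) else 0) else 0)"
    unfolding omul_def Zop_om Xop_def by (rule sum.cong) auto
  also have "\<dots> = oscale (om d (vdot c y)) (omul d n (Xop d n y) (Zop d n c)) i k"
    using d y c by (auto simp: finite_Zdn omul_XZ oscale_def om_vdot_vadd_right mult.commute dest: Zdn_len)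
  finally show "omul d n (Zop d n c) (Xop d n y) i k = oscale (om d (vdot c y)) (omul d n (Xop d n y) (Zop d n c)) i k" .
qed

lemma conj_XZ_comm: "0 < d \<Longrightarrow> length y = n \<Longrightarrow> length c = n \<Longrightarrow>
  conjop d n (Xop d n y) (conjop d n (Zop d n c) \<sigma>) = conjop d n (Zop d n c) (conjop d n (Xop d n y) \<sigma>)"
  by (simp add: conjop_conjop omul_ZX conjop_oscale_op om_cnj)

lemma conj_ZZ: "0 < d \<Longrightarrow> length b = n \<Longrightarrow> length c = n \<Longrightarrow>
  conjop d n (Zop d n b) (conjop d n (Zop d n c) \<sigma>) = conjop d n (Zop d n (vadd d b c)) \<sigma>"
  by (simp add: conjop_conjop omul_ZZ)

lemma conj_XX: "0 < d \<Longrightarrow> length a = n \<Longrightarrow> length b = n \<Longrightarrow>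
  conjop d n (Xop d n a) (conjop d n (Xop d n b) \<sigma>) = conjop d n (Xop d n (vadd d b a)) \<sigma>"
  by (simp add: conjop_conjop omul_XX)



definition lin :: "(op \<Rightarrow> op) \<Rightarrow> bool" where
  "lin f \<longleftrightarrow> (\<forall>\<sigma> \<tau>. f (\<lambda>i j. \<sigma> i j + \<tau> i j) = (\<lambda>i j. f \<sigma> i j + f \<tau> i j)) \<and>
              (\<forall>c \<sigma>. f (oscale c \<sigma>) = oscale c (f \<sigma>))"

lemma lin_add: "lin f \<Longrightarrow> f (\<lambda>i j. \<sigma> i j + \<tau> i j) = (\<lambda>i j. f \<sigma> i j + f \<tau> i j)"
  by (simp add: lin_def)
lemma lin_scale: "lin f \<Longrightarrow> f (oscale c \<sigma>) = oscale c (f \<sigma>)"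
  by (simp add: lin_def)

lemma lin_zero: "lin f \<Longrightarrow> f (\<lambda>i j. 0) = (\<lambda>i j. 0)"
proof -
  assume f: "lin f"
  have "(\<lambda>i j. 0::complex) = oscale 0 (\<lambda>i j. 0)" by (simp add: oscale_def)
  hence "f (\<lambda>i j. 0) = f (oscale 0 (\<lambda>i j. 0))" by simp
  also have "\<dots> = oscale 0 (f (\<lambda>i j. 0))" using f by (rule lin_scale)
  finally show ?thesis by (simp add: oscale_def)
qed

lemma lin_sum: assumes f: "lin f" and S: "finite S"
  shows "f (\<lambda>i j. \<Sum>s\<in>S. g s i j) = (\<lambda>i j. \<Sum>s\<in>S. f (g s) i j)"
  using S proof (induction S rule: finite_induct)
  case empty thus ?case using f by (simp add: lin_zero)
next
  case (insert x F)
  have "f (\<lambda>i j. \<Sum>s\<in>insert x F. g s i j) = f (\<lambda>i j. g x i j + (\<lambda>i j. \<Sum>s\<in>F. g s i j) i j)"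
    using insert by simp
  also have "\<dots> = (\<lambda>i j. f (g x) i j + f (\<lambda>i j. \<Sum>s\<in>F. g s i j) i j)" using f by (rule lin_add)
  also have "\<dots> = (\<lambda>i j. \<Sum>s\<in>insert x F. f (g s) i j)" using insert by simp
  finally show ?case .
qed

lemma lin_comp: "lin f \<Longrightarrow> lin g \<Longrightarrow> lin (\<lambda>\<sigma>. f (g \<sigma>))"
  by (simp add: lin_def)

lemma lin_id: "lin (\<lambda>\<sigma>. \<sigma>)"
  by (simp add: lin_def)

lemma lin_sum_fun: "finite S \<Longrightarrow> (\<And>s. s \<in> S \<Longrightarrow> lin (G s)) \<Longrightarrow> lin (\<lambda>\<sigma> i j. \<Sum>s\<in>S. G s \<sigma> i j)"
  unfolding lin_def oscale_def
  by (simp add: sum.distrib sum_distrib_left fun_eq_iff)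

lemma lin_oscale_fun: "lin f \<Longrightarrow> lin (\<lambda>\<sigma>. oscale c (f \<sigma>))"
  unfolding lin_def oscale_def by (simp add: fun_eq_iff distrib_left mult_ac)

lemma omul_add_right: "omul d n A (\<lambda>i j. \<sigma> i j + \<tau> i j) = (\<lambda>i j. omul d n A \<sigma> i j + omul d n A \<tau> i j)"
  by (simp add: omul_def distrib_left sum.distrib)
lemma omul_add_left: "omul d n (\<lambda>i j. \<sigma> i j + \<tau> i j) B = (\<lambda>i j. omul d n \<sigma> B i j + omul d n \<tau> B i j)"
  by (simp add: omul_def distrib_right sum.distrib)
lemma omul_scale_right: "omul d n A (oscale c \<sigma>) = oscale c (omul d n A \<sigma>)"
  by (simp add: omul_def oscale_def sum_distrib_left mult_ac)
lemma omul_scale_left: "omul d n (oscale c \<sigma>) B = oscale c (omul d n \<sigma> B)"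
  by (simp add: omul_def oscale_def sum_distrib_left mult_ac)

lemma lin_conjop: "lin (conjop d n A)"
  unfolding lin_def conjop_def
  by (simp add: omul_add_right omul_add_left omul_scale_right omul_scale_left)

lemma lin_kraus: "lin (\<lambda>\<sigma>. (\<lambda>i j. \<Sum>A\<leftarrow>Ks. conjop d n A \<sigma> i j))"
proof (induction Ks)
  case Nil thus ?case by (simp add: lin_def oscale_def)
next
  case (Cons A Ks)
  have e: "(\<lambda>\<sigma>. (\<lambda>i j. \<Sum>B\<leftarrow>A # Ks. conjop d n B \<sigma> i j)) =
    (\<lambda>\<sigma> i j. \<Sum>s\<in>{0::nat,1}. (if s = 0 then conjop d n A else (\<lambda>\<sigma>. (\<lambda>i j. \<Sum>B\<leftarrow>Ks. conjop d n B \<sigma> i j))) \<sigma> i j)"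
    by simp
  show ?case unfolding e
    by (rule lin_sum_fun) (auto simp: lin_conjop Cons.IH)
qed

lemma lin_M: "instrument d n M \<Longrightarrow> u \<in> Zdn d n \<Longrightarrow> lin (M u)"
proof -
  assume i: "instrument d n M" and u: "u \<in> Zdn d n"
  then obtain Ks where "\<forall>\<sigma>. M u \<sigma> = (\<lambda>i j. \<Sum>A\<leftarrow>Ks. conjop d n A \<sigma> i j)"
    unfolding instrument_def by blast
  hence "M u = (\<lambda>\<sigma>. (\<lambda>i j. \<Sum>A\<leftarrow>Ks. conjop d n A \<sigma> i j))" by auto
  thus ?thesis by (simp add: lin_kraus)
qed

lemma lin_conjop_comp: "lin g \<Longrightarrow> lin (\<lambda>\<sigma>. conjop d n A (g \<sigma>))"
  by (rule lin_comp[OF lin_conjop])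

lemma lin_M_comp: "instrument d n M \<Longrightarrow> u \<in> Zdn d n \<Longrightarrow> lin g \<Longrightarrow> lin (\<lambda>\<sigma>. M u (g \<sigma>))"
  by (rule lin_comp[OF lin_M])

lemma lin_Mhat: "0 < d \<Longrightarrow> instrument d n M \<Longrightarrow> k \<in> Zdn d n \<Longrightarrow> lin (Mhat d n M k)"
proof -
  assume d: "0 < d" and i: "instrument d n M" and k: "k \<in> Zdn d n"
  have "lin (\<lambda>\<sigma>. oscale (1 / (of_nat d) ^ (3 * n))
       (\<lambda>r c. \<Sum>a\<in>Zdn d n. \<Sum>b\<in>Zdn d n. \<Sum>x\<in>Zdn d n.
          conjop d n (Xop d n x)
            (conjop d n (Zop d n a)
              (M (vsub d k x)
                (conjop d n (Zop d n b)
                  (conjop d n (Xop d n (vneg d x)) \<sigma>)))) r c))"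
    apply (rule lin_oscale_fun)
    apply (rule lin_sum_fun, simp add: finite_Zdn)+
    apply (rule lin_conjop_comp)+
    apply (rule lin_M_comp[OF i])
     apply (metis d k vsub_Zdn Zdn_len)
    apply (rule lin_conjop_comp)+
    apply (rule lin_id)
    done
  thus ?thesis unfolding Mhat_def[abs_def] .
qed

lemma lin_foldl: "0 < d \<Longrightarrow> instrument d n M \<Longrightarrow> set ks \<subseteq> Zdn d n \<Longrightarrow>
  lin (\<lambda>\<sigma>. foldl (\<lambda>\<sigma> k. Mhat d n M k \<sigma>) \<sigma> ks)"
proof (induction ks)
  case Nil thus ?case by (simp add: lin_id)
next
  case (Cons k ks)
  hence l1: "lin (\<lambda>\<sigma>. foldl (\<lambda>\<sigma> k. Mhat d n M k \<sigma>) \<sigma> ks)" and l2: "lin (Mhat d n M k)"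
    by (auto simp: lin_Mhat)
  have "lin (\<lambda>\<sigma>. (\<lambda>\<tau>. foldl (\<lambda>\<sigma> k. Mhat d n M k \<sigma>) \<tau> ks) (Mhat d n M k \<sigma>))"
    by (rule lin_comp[OF l1 l2])
  thus ?case by simp
qed

lemma otr_sum: "finite S \<Longrightarrow> otr d n (\<lambda>i j. \<Sum>s\<in>S. g s i j) = (\<Sum>s\<in>S. otr d n (g s))"
  unfolding otr_def by (rule sum.swap)

lemma otr_oscale: "otr d n (oscale c \<sigma>) = c * otr d n \<sigma>"
  unfolding otr_def oscale_def by (simp add: sum_distrib_left)

lemma otr_add: "otr d n (\<lambda>i j. \<sigma> i j + \<tau> i j) = otr d n \<sigma> + otr d n \<tau>"
  unfolding otr_def by (simp add: sum.distrib)



definition qf :: "nat \<Rightarrow> nat \<Rightarrow> op \<Rightarrow> (nat list \<Rightarrow> complex) \<Rightarrow> complex" where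
  "qf d n \<sigma> v = (\<Sum>i\<in>Zdn d n. \<Sum>j\<in>Zdn d n. cnj (v i) * \<sigma> i j * v j)"

definition pos :: "nat \<Rightarrow> nat \<Rightarrow> op \<Rightarrow> bool" where
  "pos d n \<sigma> \<longleftrightarrow> (\<forall>v. qf d n \<sigma> v \<in> \<real> \<and> 0 \<le> Re (qf d n \<sigma> v))"

lemma density_pos: "density d n \<rho> \<Longrightarrow> pos d n \<rho> \<and> otr d n \<rho> = 1"
  by (simp add: density_def pos_def qf_def)

lemma qf_add: "qf d n (\<lambda>i j. \<sigma> i j + \<tau> i j) v = qf d n \<sigma> v + qf d n \<tau> v"
  by (simp add: qf_def distrib_left distrib_right sum.distrib)

lemma qf_scale: "qf d n (oscale c \<sigma>) v = c * qf d n \<sigma> v"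
  by (simp add: qf_def oscale_def sum_distrib_left mult_ac)

lemma pos_add: "pos d n \<sigma> \<Longrightarrow> pos d n \<tau> \<Longrightarrow> pos d n (\<lambda>i j. \<sigma> i j + \<tau> i j)"
  by (simp add: pos_def qf_add)

lemma pos_zero: "pos d n (\<lambda>i j. 0)"
  by (simp add: pos_def qf_def)

lemma pos_scale: "pos d n \<sigma> \<Longrightarrow> 0 \<le> r \<Longrightarrow> pos d n (oscale (of_real r) \<sigma>)"
  by (simp add: pos_def qf_scale)

lemma swap22: "(\<Sum>a\<in>A. \<Sum>b\<in>B. \<Sum>c\<in>C. \<Sum>e\<in>E. f a b c e) = (\<Sum>c\<in>C. \<Sum>e\<in>E. \<Sum>a\<in>A. \<Sum>b\<in>B. (f a b c e :: complex))"
proof -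
  have "(\<Sum>a\<in>A. \<Sum>b\<in>B. \<Sum>c\<in>C. \<Sum>e\<in>E. f a b c e) = (\<Sum>a\<in>A. \<Sum>c\<in>C. \<Sum>b\<in>B. \<Sum>e\<in>E. f a b c e)"
    by (rule sum.cong[OF refl], rule sum.swap)
  also have "\<dots> = (\<Sum>a\<in>A. \<Sum>c\<in>C. \<Sum>e\<in>E. \<Sum>b\<in>B. f a b c e)"
    by (rule sum.cong[OF refl], rule sum.cong[OF refl], rule sum.swap)
  also have "\<dots> = (\<Sum>c\<in>C. \<Sum>a\<in>A. \<Sum>e\<in>E. \<Sum>b\<in>B. f a b c e)" by (rule sum.swap)
  also have "\<dots> = (\<Sum>c\<in>C. \<Sum>e\<in>E. \<Sum>a\<in>A. \<Sum>b\<in>B. f a b c e)"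
    by (rule sum.cong[OF refl], rule sum.swap)
  finally show ?thesis .
qed

lemma qf_conjop: "qf d n (conjop d n A \<sigma>) v = qf d n \<sigma> (\<lambda>k. \<Sum>j\<in>Zdn d n. cnj (A j k) * v j)"
proof -
  let ?Z = "Zdn d n"
  let ?F = "\<lambda>i j k l. cnj (v i) * A i k * \<sigma> k l * (cnj (A j l) * v j)"
  have "qf d n (conjop d n A \<sigma>) v = (\<Sum>i\<in>?Z. \<Sum>j\<in>?Z. \<Sum>l\<in>?Z. \<Sum>k\<in>?Z. ?F i j k l)"
    by (simp add: qf_def conjop_def omul_def oadj_def sum_distrib_left sum_distrib_right mult_ac)
  also have "\<dots> = (\<Sum>l\<in>?Z. \<Sum>k\<in>?Z. \<Sum>i\<in>?Z. \<Sum>j\<in>?Z. ?F i j k l)" by (rule swap22)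
  also have "\<dots> = (\<Sum>k\<in>?Z. \<Sum>l\<in>?Z. \<Sum>i\<in>?Z. \<Sum>j\<in>?Z. ?F i j k l)" by (rule sum.swap)
  also have "\<dots> = qf d n \<sigma> (\<lambda>k. \<Sum>j\<in>Zdn d n. cnj (A j k) * v j)"
    by (simp add: qf_def sum_distrib_left sum_distrib_right mult_ac)
  finally show ?thesis .
qed

lemma pos_conjop: "pos d n \<sigma> \<Longrightarrow> pos d n (conjop d n A \<sigma>)"
  by (simp add: pos_def qf_conjop)

lemma pos_kraus: "pos d n \<sigma> \<Longrightarrow> pos d n (\<lambda>i j. \<Sum>A\<leftarrow>Ks. conjop d n A \<sigma> i j)"
proof (induction Ks)
  case Nil thus ?case by (simp add: pos_zero)
next
  case (Cons A Ks) thus ?case by (simp add: pos_add pos_conjop)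
qed

lemma pos_M: "instrument d n M \<Longrightarrow> u \<in> Zdn d n \<Longrightarrow> pos d n \<sigma> \<Longrightarrow> pos d n (M u \<sigma>)"
proof -
  assume i: "instrument d n M" and u: "u \<in> Zdn d n" and p: "pos d n \<sigma>"
  then obtain Ks where "\<forall>\<sigma>. M u \<sigma> = (\<lambda>i j. \<Sum>A\<leftarrow>Ks. conjop d n A \<sigma> i j)"
    unfolding instrument_def by blast
  thus ?thesis using pos_kraus[OF p] by simp
qed

lemma pos_diag: "pos d n \<sigma> \<Longrightarrow> j \<in> Zdn d n \<Longrightarrow> \<sigma> j j \<in> \<real> \<and> 0 \<le> Re (\<sigma> j j)"
proof -
  assume p: "pos d n \<sigma>" and j: "j \<in> Zdn d n"
  let ?v = "\<lambda>i. if i = j then 1 else (0::complex)"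
  have "qf d n \<sigma> ?v = (\<Sum>i\<in>Zdn d n. if i = j then (\<Sum>l\<in>Zdn d n. if l = j then \<sigma> j j else 0) else 0)"
    unfolding qf_def by (intro sum.cong refl) (auto intro!: sum.cong)
  also have "\<dots> = \<sigma> j j" using j by (simp add: finite_Zdn)
  finally have "qf d n \<sigma> ?v = \<sigma> j j" .
  thus ?thesis using p unfolding pos_def by metis
qed

lemma pos_otr: "pos d n \<sigma> \<Longrightarrow> otr d n \<sigma> \<in> \<real> \<and> 0 \<le> Re (otr d n \<sigma>)"
  unfolding otr_def using pos_diag
  by (auto intro!: sum_in_Reals sum_nonneg simp: Re_sum)

lemma M_tni: "instrument d n M \<Longrightarrow> u \<in> Zdn d n \<Longrightarrow> pos d n \<sigma> \<Longrightarrow> Re (otr d n (M u \<sigma>)) \<le> Re (otr d n \<sigma>)"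
proof -
  assume i: "instrument d n M" and u: "u \<in> Zdn d n" and p: "pos d n \<sigma>"
  have "otr d n \<sigma> = (\<Sum>u\<in>Zdn d n. otr d n (M u \<sigma>))" using i unfolding instrument_def by simp
  hence "Re (otr d n \<sigma>) = (\<Sum>u\<in>Zdn d n. Re (otr d n (M u \<sigma>)))" by (simp add: Re_sum)
  moreover have "Re (otr d n (M u \<sigma>)) \<le> (\<Sum>u\<in>Zdn d n. Re (otr d n (M u \<sigma>)))"
    by (rule member_le_sum) (use u i p pos_M pos_otr finite_Zdn in auto)
  ultimately show ?thesis by simp
qed

definition Gop :: "nat \<Rightarrow> nat \<Rightarrow> nat list \<Rightarrow> nat list \<Rightarrow> nat list \<Rightarrow> op" where
  "Gop d n ap a b = omul d n (Zop d n b) (Xop d n (vsub d ap a))"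

lemma otr_G: "0 < d \<Longrightarrow> ap \<in> Zdn d n \<Longrightarrow> a \<in> Zdn d n \<Longrightarrow> otr d n (conjop d n (Gop d n ap a b) \<tau>) = otr d n \<tau>"
proof -
  assume d: "0 < d" and ap: "ap \<in> Zdn d n" and a: "a \<in> Zdn d n"
  have l: "length (vsub d ap a) = n" using ap a by (simp add: vsub_def Zdn_len)
  show ?thesis unfolding Gop_def conjop_conjop[symmetric]
    by (simp add: otr_conj_Z otr_conj_X[OF d l])
qed

fun chain :: "nat \<Rightarrow> nat \<Rightarrow> (nat list \<Rightarrow> op \<Rightarrow> op) \<Rightarrow> nat list \<Rightarrow> op \<Rightarrow> nat list list \<Rightarrow> nat list list \<Rightarrow> nat list list \<Rightarrow> op" where
  "chain d n M ap \<sigma> (a # as) (b # bs) (u # os) = chain d n M a (M u (conjop d n (Gop d n ap a b) \<sigma>)) as bs os"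
| "chain d n M ap \<sigma> _ _ _ = \<sigma>"

lemma lin_chain: "instrument d n M \<Longrightarrow> set os \<subseteq> Zdn d n \<Longrightarrow> lin (\<lambda>\<sigma>. chain d n M ap \<sigma> as bs os)"
proof (induction as arbitrary: ap bs os)
  case Nil thus ?case by (simp add: lin_id)
next
  case (Cons a as)
  show ?case
  proof (cases "bs = [] \<or> os = []")
    case True thus ?thesis by (auto simp: lin_id neq_Nil_conv)
  next
    case False
    then obtain b bs' u os' where e: "bs = b # bs'" "os = u # os'" by (auto simp: neq_Nil_conv)
    have u: "u \<in> Zdn d n" and s2: "set os' \<subseteq> Zdn d n" using Cons.prems e by auto
    have l1: "lin (\<lambda>\<sigma>. chain d n M a \<sigma> as bs' os')" by (rule Cons.IH[OF Cons.prems(1) s2])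
    have l2: "lin (\<lambda>\<sigma>. M u (conjop d n (Gop d n ap a b) \<sigma>))"
      by (rule lin_M_comp[OF Cons.prems(1) u lin_conjop_comp[OF lin_id]])
    show ?thesis using lin_comp[OF l1 l2] by (simp add: e)
  qed
qed

lemma chain_bound: "0 < d \<Longrightarrow> instrument d n M \<Longrightarrow> ap \<in> Zdn d n \<Longrightarrow> set as \<subseteq> Zdn d n \<Longrightarrow>
  set os \<subseteq> Zdn d n \<Longrightarrow> pos d n \<tau> \<Longrightarrow>
  pos d n (chain d n M ap \<tau> as bs os) \<and> Re (otr d n (chain d n M ap \<tau> as bs os)) \<le> Re (otr d n \<tau>)"
proof (induction as arbitrary: ap \<tau> bs os)
  case Nil thus ?case by simp
next
  case (Cons a as)
  show ?case
  proof (cases "bs = [] \<or> os = []")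
    case True thus ?thesis using Cons by (auto simp: neq_Nil_conv)
  next
    case False
    then obtain b bs' u os' where e: "bs = b # bs'" "os = u # os'" by (auto simp: neq_Nil_conv)
    let ?\<mu> = "M u (conjop d n (Gop d n ap a b) \<tau>)"
    have u: "u \<in> Zdn d n" and a: "a \<in> Zdn d n" using Cons.prems e by auto
    have pm: "pos d n ?\<mu>" by (rule pos_M[OF Cons.prems(2) u pos_conjop[OF Cons.prems(6)]])
    have "Re (otr d n ?\<mu>) \<le> Re (otr d n (conjop d n (Gop d n ap a b) \<tau>))"
      by (rule M_tni[OF Cons.prems(2) u pos_conjop[OF Cons.prems(6)]])
    also have "\<dots> = Re (otr d n \<tau>)" using Cons.prems(1,3) a by (simp add: otr_G)
    finally have t: "Re (otr d n ?\<mu>) \<le> Re (otr d n \<tau>)" .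
    have "pos d n (chain d n M a ?\<mu> as bs' os') \<and> Re (otr d n (chain d n M a ?\<mu> as bs' os')) \<le> Re (otr d n ?\<mu>)"
      using Cons.IH[of a os' ?\<mu> bs'] Cons.prems a e pm by auto
    thus ?thesis using t e by auto
  qed
qed

lemma seqprob_chain: "0 < d \<Longrightarrow> instrument d n M \<Longrightarrow> ap \<in> Zdn d n \<Longrightarrow> set as \<subseteq> Zdn d n \<Longrightarrow>
  set os \<subseteq> Zdn d n \<Longrightarrow> length bs = length as \<Longrightarrow> length os = length as \<Longrightarrow> pos d n \<tau> \<Longrightarrow> otr d n \<tau> = 1 \<Longrightarrow>
  seqprob d n M \<tau> ap as bs os = otr d n (chain d n M ap \<tau> as bs os)"
proof (induction as arbitrary: ap \<tau> bs os)
  case Nil thus ?case by simp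
next
  case (Cons a as)
  then obtain b bs' u os' where e: "bs = b # bs'" "os = u # os'" by (metis length_Suc_conv)
  let ?\<mu> = "M u (conjop d n (Gop d n ap a b) \<tau>)"
  let ?p = "otr d n ?\<mu>"
  have u: "u \<in> Zdn d n" and a: "a \<in> Zdn d n" using Cons.prems e by auto
  have pm: "pos d n ?\<mu>" by (rule pos_M[OF Cons.prems(2) u pos_conjop[OF Cons.prems(8)]])
  have s1: "set as \<subseteq> Zdn d n" and s2: "set os' \<subseteq> Zdn d n" and l1: "length bs' = length as"
    and l2: "length os' = length as" using Cons.prems(4-7) e by auto
  have lhs: "seqprob d n M \<tau> ap (a # as) bs os = ?p * seqprob d n M (oscale (1 / ?p) ?\<mu>) a as bs' os'"
    by (simp add: e Let_def Gop_def)
  have rhs: "chain d n M ap \<tau> (a # as) bs os = chain d n M a ?\<mu> as bs' os'" by (simp add: e)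
  show ?case
  proof (cases "?p = 0")
    case True
    have cb: "pos d n (chain d n M a ?\<mu> as bs' os') \<and> Re (otr d n (chain d n M a ?\<mu> as bs' os')) \<le> Re ?p"
      by (rule chain_bound[OF Cons.prems(1,2) a s1 s2 pm])
    hence "otr d n (chain d n M a ?\<mu> as bs' os') \<in> \<real>" "0 \<le> Re (otr d n (chain d n M a ?\<mu> as bs' os'))"
      using pos_otr by blast+
    hence "Im (otr d n (chain d n M a ?\<mu> as bs' os')) = 0" "Re (otr d n (chain d n M a ?\<mu> as bs' os')) = 0"
      using cb True by (simp_all add: complex_is_Real_iff)
    hence "otr d n (chain d n M a ?\<mu> as bs' os') = 0" by (simp add: complex_eq_iff)
    thus ?thesis using lhs rhs True by simp
  next
    case False
    have pr: "?p \<in> \<real>" "0 \<le> Re ?p" using pos_otr[OF pm] by auto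
    have pe: "?p = of_real (Re ?p)" using pr(1) by (simp add: complex_is_Real_iff complex_eq_iff)
    have ip: "1 / ?p = of_real (1 / Re ?p)" using pe by (metis of_real_divide of_real_1)
    have pos': "pos d n (oscale (1 / ?p) ?\<mu>)" unfolding ip by (rule pos_scale[OF pm]) (use pr in simp)
    have tr': "otr d n (oscale (1 / ?p) ?\<mu>) = 1" using False by (simp add: otr_oscale)
    have "seqprob d n M (oscale (1 / ?p) ?\<mu>) a as bs' os' = otr d n (chain d n M a (oscale (1 / ?p) ?\<mu>) as bs' os')"
      by (rule Cons.IH[OF Cons.prems(1,2) a s1 s2 l1 l2 pos' tr'])
    also have "\<dots> = otr d n (oscale (1 / ?p) (chain d n M a ?\<mu> as bs' os'))"
      using lin_scale[OF lin_chain[OF Cons.prems(2) s2, of a as bs']] by simp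
    also have "\<dots> = (1 / ?p) * otr d n (chain d n M a ?\<mu> as bs' os')" by (rule otr_oscale)
    finally show ?thesis using lhs rhs False by simp
  qed
qed



definition Tf :: "nat \<Rightarrow> nat \<Rightarrow> (nat list \<Rightarrow> op \<Rightarrow> op) \<Rightarrow> op \<Rightarrow> nat list list \<Rightarrow> complex" where
  "Tf d n M \<sigma> ks = otr d n (foldl (\<lambda>\<sigma> k. Mhat d n M k \<sigma>) \<sigma> ks)"

lemma Tf_Nil: "Tf d n M \<sigma> [] = otr d n \<sigma>" by (simp add: Tf_def)
lemma Tf_Cons: "Tf d n M \<sigma> (k # ks) = Tf d n M (Mhat d n M k \<sigma>) ks" by (simp add: Tf_def)

lemma Tf_sum3:
  assumes d: "0 < d" and i: "instrument d n M" and ks: "set ks \<subseteq> Zdn d n"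
  shows "Tf d n M (oscale C (\<lambda>r c. \<Sum>a\<in>Zdn d n. \<Sum>b\<in>Zdn d n. \<Sum>x\<in>Zdn d n. g a b x r c)) ks
     = C * (\<Sum>a\<in>Zdn d n. \<Sum>b\<in>Zdn d n. \<Sum>x\<in>Zdn d n. Tf d n M (g a b x) ks)"
proof -
  define F where "F = (\<lambda>\<sigma>. foldl (\<lambda>\<sigma> k. Mhat d n M k \<sigma>) \<sigma> ks)"
  have l: "lin F" unfolding F_def by (rule lin_foldl[OF d i ks])
  let ?Z = "Zdn d n"
  have h3: "\<And>a b. F (\<lambda>r c. \<Sum>x\<in>?Z. g a b x r c) = (\<lambda>r c. \<Sum>x\<in>?Z. F (g a b x) r c)"
    by (rule lin_sum[OF l finite_Zdn])
  have h2: "\<And>a. F (\<lambda>r c. \<Sum>b\<in>?Z. \<Sum>x\<in>?Z. g a b x r c) = (\<lambda>r c. \<Sum>b\<in>?Z. \<Sum>x\<in>?Z. F (g a b x) r c)"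
  proof -
    fix a
    have "F (\<lambda>r c. \<Sum>b\<in>?Z. \<Sum>x\<in>?Z. g a b x r c) = (\<lambda>r c. \<Sum>b\<in>?Z. F (\<lambda>r c. \<Sum>x\<in>?Z. g a b x r c) r c)"
      by (rule lin_sum[OF l finite_Zdn])
    thus "F (\<lambda>r c. \<Sum>b\<in>?Z. \<Sum>x\<in>?Z. g a b x r c) = (\<lambda>r c. \<Sum>b\<in>?Z. \<Sum>x\<in>?Z. F (g a b x) r c)"
      by (simp add: h3)
  qed
  have h1: "F (\<lambda>r c. \<Sum>a\<in>?Z. \<Sum>b\<in>?Z. \<Sum>x\<in>?Z. g a b x r c) = (\<lambda>r c. \<Sum>a\<in>?Z. \<Sum>b\<in>?Z. \<Sum>x\<in>?Z. F (g a b x) r c)"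
  proof -
    have "F (\<lambda>r c. \<Sum>a\<in>?Z. \<Sum>b\<in>?Z. \<Sum>x\<in>?Z. g a b x r c) = (\<lambda>r c. \<Sum>a\<in>?Z. F (\<lambda>r c. \<Sum>b\<in>?Z. \<Sum>x\<in>?Z. g a b x r c) r c)"
      by (rule lin_sum[OF l finite_Zdn])
    thus ?thesis by (simp add: h2)
  qed
  have "Tf d n M (oscale C (\<lambda>r c. \<Sum>a\<in>?Z. \<Sum>b\<in>?Z. \<Sum>x\<in>?Z. g a b x r c)) ks
     = otr d n (F (oscale C (\<lambda>r c. \<Sum>a\<in>?Z. \<Sum>b\<in>?Z. \<Sum>x\<in>?Z. g a b x r c)))"
    by (simp add: Tf_def F_def)
  also have "\<dots> = C * otr d n (F (\<lambda>r c. \<Sum>a\<in>?Z. \<Sum>b\<in>?Z. \<Sum>x\<in>?Z. g a b x r c))"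
    by (simp add: lin_scale[OF l] otr_oscale)
  also have "\<dots> = C * (\<Sum>a\<in>?Z. \<Sum>b\<in>?Z. \<Sum>x\<in>?Z. otr d n (F (g a b x)))"
    by (simp add: h1 otr_sum finite_Zdn)
  finally show ?thesis by (simp add: Tf_def F_def)
qed

lemma Mhat_Z_inv:
  assumes d: "0 < d" and c: "c \<in> Zdn d n"
  shows "Mhat d n M k (conjop d n (Zop d n c) \<sigma>) = Mhat d n M k \<sigma>"
proof -
  let ?Z = "Zdn d n"
  let ?H = "\<lambda>a b x. conjop d n (Xop d n x) (conjop d n (Zop d n a)
              (M (vsub d k x) (conjop d n (Zop d n b) (conjop d n (Xop d n (vneg d x)) \<sigma>))))"
  have e: "\<And>a b x. b \<in> ?Z \<Longrightarrow> x \<in> ?Z \<Longrightarrow>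
     conjop d n (Xop d n x) (conjop d n (Zop d n a)
              (M (vsub d k x) (conjop d n (Zop d n b) (conjop d n (Xop d n (vneg d x)) (conjop d n (Zop d n c) \<sigma>)))))
     = ?H a (vadd d b c) x"
    using d c by (simp add: conj_XZ_comm conj_ZZ Zdn_len)
  have "\<And>a r cc. (\<Sum>b\<in>?Z. \<Sum>x\<in>?Z. ?H a (vadd d b c) x r cc) = (\<Sum>b\<in>?Z. \<Sum>x\<in>?Z. ?H a b x r cc)"
    by (rule sum.reindex_bij_betw[OF vadd_bij[OF d Zdn_len[OF c]]])
  thus ?thesis unfolding Mhat_def using e by simp
qed

lemma Tf_Z_inv:
  assumes d: "0 < d" and c: "c \<in> Zdn d n"
  shows "Tf d n M (conjop d n (Zop d n c) \<sigma>) ks = Tf d n M \<sigma> ks"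
proof (cases ks)
  case Nil thus ?thesis by (simp add: Tf_Nil otr_conj_Z)
next
  case (Cons k ks') thus ?thesis by (simp add: Tf_Cons Mhat_Z_inv[OF d c])
qed



lemma seqs_0: "seqs d n 0 = {[]}"
  by (auto simp: seqs_def)

lemma finite_seqs: "finite (seqs d n m)"
proof -
  have "seqs d n m = {xs. set xs \<subseteq> Zdn d n \<and> length xs = m}" by (auto simp: seqs_def)
  thus ?thesis by (simp add: finite_lists_length_eq finite_Zdn)
qed

lemma seqs_Suc: "seqs d n (Suc m) = (\<lambda>(a, as). a # as) ` (Zdn d n \<times> seqs d n m)"
proof
  show "seqs d n (Suc m) \<subseteq> (\<lambda>(a, as). a # as) ` (Zdn d n \<times> seqs d n m)"
  proof
    fix xs assume "xs \<in> seqs d n (Suc m)"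
    then obtain a as where "xs = a # as" "a \<in> Zdn d n" "as \<in> seqs d n m"
      by (auto simp: seqs_def length_Suc_conv)
    thus "xs \<in> (\<lambda>(a, as). a # as) ` (Zdn d n \<times> seqs d n m)" by force
  qed
  show "(\<lambda>(a, as). a # as) ` (Zdn d n \<times> seqs d n m) \<subseteq> seqs d n (Suc m)"
    by (auto simp: seqs_def)
qed

lemma sum_seqs_Suc: "sum f (seqs d n (Suc m)) = (\<Sum>a\<in>Zdn d n. \<Sum>as\<in>seqs d n m. f (a # as))"
proof -
  have inj: "inj_on (\<lambda>(a, as). a # as) (Zdn d n \<times> seqs d n m)" by (auto intro: inj_onI)
  have "sum f (seqs d n (Suc m)) = (\<Sum>p\<in>Zdn d n \<times> seqs d n m. f (fst p # snd p))"
    unfolding seqs_Suc by (subst sum.reindex[OF inj]) (simp add: case_prod_beta)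
  also have "\<dots> = (\<Sum>a\<in>Zdn d n. \<Sum>as\<in>seqs d n m. f (a # as))"
    by (subst sum.cartesian_product) (simp add: case_prod_beta)
  finally show ?thesis .
qed

definition Rf :: "nat \<Rightarrow> nat \<Rightarrow> (nat list \<Rightarrow> op \<Rightarrow> op) \<Rightarrow> op \<Rightarrow> nat list \<Rightarrow> nat list list \<Rightarrow> complex" where
  "Rf d n M \<sigma> ap ks =
     (\<Sum>\<alpha>\<in>seqs d n (length ks). \<Sum>\<beta>\<in>seqs d n (length ks). \<Sum>os\<in>seqs d n (length ks).
        if map2 (vadd d) \<alpha> os = ks
        then (1 / (of_nat d) ^ (2 * n)) ^ (length ks) * otr d n (chain d n M ap \<sigma> \<alpha> \<beta> os)
        else 0)"

lemma Rf_Nil: "Rf d n M \<sigma> ap [] = otr d n \<sigma>"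
  by (simp add: Rf_def seqs_0)

lemma reorder5: "(\<Sum>x1\<in>A1. \<Sum>x2\<in>A2. \<Sum>x3\<in>A3. \<Sum>x4\<in>A4. \<Sum>x5\<in>A5. f x1 x2 x3 x4 x5) =
   (\<Sum>x2\<in>A2. \<Sum>x4\<in>A4. \<Sum>x1\<in>A1. \<Sum>x3\<in>A3. \<Sum>x5\<in>A5. (f x1 x2 x3 x4 x5 :: complex))"
proof -
  have "(\<Sum>x1\<in>A1. \<Sum>x2\<in>A2. \<Sum>x3\<in>A3. \<Sum>x4\<in>A4. \<Sum>x5\<in>A5. f x1 x2 x3 x4 x5) =
    (\<Sum>x2\<in>A2. \<Sum>x1\<in>A1. \<Sum>x3\<in>A3. \<Sum>x4\<in>A4. \<Sum>x5\<in>A5. f x1 x2 x3 x4 x5)" by (rule sum.swap)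
  also have "\<dots> = (\<Sum>x2\<in>A2. \<Sum>x1\<in>A1. \<Sum>x4\<in>A4. \<Sum>x3\<in>A3. \<Sum>x5\<in>A5. f x1 x2 x3 x4 x5)"
    by (rule sum.cong[OF refl], rule sum.cong[OF refl], rule sum.swap)
  also have "\<dots> = (\<Sum>x2\<in>A2. \<Sum>x4\<in>A4. \<Sum>x1\<in>A1. \<Sum>x3\<in>A3. \<Sum>x5\<in>A5. f x1 x2 x3 x4 x5)"
    by (rule sum.cong[OF refl], rule sum.swap)
  finally show ?thesis .
qed

lemma Rf_Cons:
  assumes d: "0 < d" and k: "k \<in> Zdn d n"
  shows "Rf d n M \<sigma> ap (k # ks) = (1 / (of_nat d) ^ (2 * n)) *
     (\<Sum>a\<in>Zdn d n. \<Sum>b\<in>Zdn d n. Rf d n M (M (vsub d k a) (conjop d n (Gop d n ap a b) \<sigma>)) a ks)"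
proof -
  let ?Z = "Zdn d n"
  let ?S = "seqs d n (length ks)"
  let ?c = "1 / (of_nat d) ^ (2 * n) :: complex"
  let ?Y = "\<lambda>a b u as bs os. if map2 (vadd d) as os = ks
        then ?c ^ (length ks) * otr d n (chain d n M a (M u (conjop d n (Gop d n ap a b) \<sigma>)) as bs os) else 0"
  have "Rf d n M \<sigma> ap (k # ks) = (\<Sum>a\<in>?Z. \<Sum>as\<in>?S. \<Sum>b\<in>?Z. \<Sum>bs\<in>?S. \<Sum>u\<in>?Z. \<Sum>os\<in>?S.
      if vadd d a u = k then ?c * ?Y a b u as bs os else 0)"
    unfolding Rf_def by (simp add: sum_seqs_Suc) (intro sum.cong refl, simp)
  also have "\<dots> = (\<Sum>a\<in>?Z. \<Sum>b\<in>?Z. \<Sum>u\<in>?Z. \<Sum>as\<in>?S. \<Sum>bs\<in>?S. \<Sum>os\<in>?S.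
      if vadd d a u = k then ?c * ?Y a b u as bs os else 0)"
    by (rule sum.cong[OF refl], rule reorder5)
  also have "\<dots> = (\<Sum>a\<in>?Z. \<Sum>b\<in>?Z. \<Sum>u\<in>?Z. if vadd d a u = k then ?c * Rf d n M (M u (conjop d n (Gop d n ap a b) \<sigma>)) a ks else 0)"
    unfolding Rf_def by (intro sum.cong refl) (simp add: sum_distrib_left)
  also have "\<dots> = (\<Sum>a\<in>?Z. \<Sum>b\<in>?Z. ?c * Rf d n M (M (vsub d k a) (conjop d n (Gop d n ap a b) \<sigma>)) a ks)"
    by (intro sum.cong refl) (rule sum_vadd_solve[OF d _ k], simp)
  finally show ?thesis by (simp add: sum_distrib_left)
qed



lemma conj_G: "0 < d \<Longrightarrow> ap \<in> Zdn d n \<Longrightarrow> x \<in> Zdn d n \<Longrightarrow>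
  conjop d n (Zop d n b) (conjop d n (Xop d n (vneg d x)) (conjop d n (Xop d n ap) \<sigma>)) = conjop d n (Gop d n ap x b) \<sigma>"
proof -
  assume d: "0 < d" and ap: "ap \<in> Zdn d n" and x: "x \<in> Zdn d n"
  have "conjop d n (Xop d n (vneg d x)) (conjop d n (Xop d n ap) \<sigma>) = conjop d n (Xop d n (vadd d ap (vneg d x))) \<sigma>"
    by (rule conj_XX[OF d]) (simp_all add: Zdn_len[OF ap] Zdn_len[OF x])
  thus ?thesis by (simp add: conjop_conjop Gop_def vsub_def)
qed

lemma H_simp: "0 < d \<Longrightarrow> ap \<in> Zdn d n \<Longrightarrow> a \<in> Zdn d n \<Longrightarrow> x \<in> Zdn d n \<Longrightarrow>
  conjop d n (Xop d n x) (conjop d n (Zop d n a) (M u (conjop d n (Zop d n b) (conjop d n (Xop d n (vneg d x)) (conjop d n (Xop d n ap) \<sigma>)))))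
  = conjop d n (Zop d n a) (conjop d n (Xop d n x) (M u (conjop d n (Gop d n ap x b) \<sigma>)))"
  by (simp only: conj_G) (rule conj_XZ_comm, simp_all add: Zdn_len)

lemma main_R:
  assumes d: "0 < d" and i: "instrument d n M"
  shows "ap \<in> Zdn d n \<Longrightarrow> set ks \<subseteq> Zdn d n \<Longrightarrow> Rf d n M \<sigma> ap ks = Tf d n M (conjop d n (Xop d n ap) \<sigma>) ks"
proof (induction ks arbitrary: \<sigma> ap)
  case Nil thus ?case using d by (simp add: Rf_Nil Tf_Nil otr_conj_X Zdn_len)
next
  case (Cons k ks)
  let ?Z = "Zdn d n"
  let ?c = "1 / (of_nat d) ^ (2 * n) :: complex"
  let ?W = "\<lambda>b x. Tf d n M (conjop d n (Xop d n x) (M (vsub d k x) (conjop d n (Gop d n ap x b) \<sigma>))) ks"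
  have k: "k \<in> ?Z" and ks: "set ks \<subseteq> ?Z" using Cons.prems by auto
  have "Rf d n M \<sigma> ap (k # ks) = ?c * (\<Sum>a\<in>?Z. \<Sum>b\<in>?Z. Rf d n M (M (vsub d k a) (conjop d n (Gop d n ap a b) \<sigma>)) a ks)"
    by (rule Rf_Cons[OF d k])
  also have "\<dots> = ?c * (\<Sum>a\<in>?Z. \<Sum>b\<in>?Z. ?W b a)"
    by (intro arg_cong[where f="\<lambda>t. ?c * t"] sum.cong refl) (simp add: Cons.IH[OF _ ks])
  also have "\<dots> = ?c * (\<Sum>b\<in>?Z. \<Sum>x\<in>?Z. ?W b x)" by (rule arg_cong[where f="\<lambda>t. ?c * t"], rule sum.swap)
  finally have L: "Rf d n M \<sigma> ap (k # ks) = ?c * (\<Sum>b\<in>?Z. \<Sum>x\<in>?Z. ?W b x)" .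
  have "Tf d n M (conjop d n (Xop d n ap) \<sigma>) (k # ks) = Tf d n M (Mhat d n M k (conjop d n (Xop d n ap) \<sigma>)) ks"
    by (rule Tf_Cons)
  also have "\<dots> = (1 / (of_nat d) ^ (3 * n)) * (\<Sum>a\<in>?Z. \<Sum>b\<in>?Z. \<Sum>x\<in>?Z.
      Tf d n M (conjop d n (Xop d n x) (conjop d n (Zop d n a) (M (vsub d k x)
        (conjop d n (Zop d n b) (conjop d n (Xop d n (vneg d x)) (conjop d n (Xop d n ap) \<sigma>)))))) ks)"
    unfolding Mhat_def by (rule Tf_sum3[OF d i ks])
  also have "\<dots> = (1 / (of_nat d) ^ (3 * n)) * (\<Sum>a\<in>?Z. \<Sum>b\<in>?Z. \<Sum>x\<in>?Z. ?W b x)"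
    using d Cons.prems(1)
    by (intro arg_cong[where f="\<lambda>t. _ * t"] sum.cong refl)
       (simp only: H_simp Tf_Z_inv)
  also have "\<dots> = (1 / (of_nat d) ^ (3 * n)) * (of_nat d ^ n * (\<Sum>b\<in>?Z. \<Sum>x\<in>?Z. ?W b x))"
    by (simp add: card_Zdn)
  also have "\<dots> = ?c * (\<Sum>b\<in>?Z. \<Sum>x\<in>?Z. ?W b x)"
  proof -
    have "(1 / (of_nat d) ^ (3 * n)) * (of_nat d ^ n) = (?c :: complex)"
      using d by (simp add: field_simps power_add[symmetric] mult_2 add.commute)
    thus ?thesis by (simp only: mult.assoc[symmetric])
  qed
  finally show ?case by (simp only: L)
qed

lemma Mhat_X0:
  assumes d: "0 < d"
  shows "Mhat d n M k (conjop d n (Xop d n (vzero n)) \<rho>) = Mhat d n M k \<rho>"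
proof -
  have "\<And>x. x \<in> Zdn d n \<Longrightarrow> conjop d n (Xop d n (vneg d x)) (conjop d n (Xop d n (vzero n)) \<rho>) = conjop d n (Xop d n (vneg d x)) \<rho>"
  proof -
    fix x assume x: "x \<in> Zdn d n"
    have "conjop d n (Xop d n (vneg d x)) (conjop d n (Xop d n (vzero n)) \<rho>) = conjop d n (Xop d n (vadd d (vzero n) (vneg d x))) \<rho>"
      by (rule conj_XX[OF d]) (simp_all add: Zdn_len[OF x] vzero_def)
    also have "vadd d (vzero n) (vneg d x) = vneg d x" by (rule vzero_add[OF vneg_Zdn[OF d Zdn_len[OF x]]])
    finally show "conjop d n (Xop d n (vneg d x)) (conjop d n (Xop d n (vzero n)) \<rho>) = conjop d n (Xop d n (vneg d x)) \<rho>" .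
  qed
  thus ?thesis unfolding Mhat_def by simp
qed



theorem lemma1:
  fixes d n m :: nat and M :: "nat list \<Rightarrow> op \<Rightarrow> op" and \<rho> :: op and ks :: "nat list list"
  assumes "d \<ge> 1" and "n \<ge> 1" and "m \<ge> 1"
    and "instrument d n M"
    and "density d n \<rho>"
    and "ks \<in> seqs d n m"
  shows "routine_prob d n M \<rho> m ks = otr d n (foldl (\<lambda>\<sigma> k. Mhat d n M k \<sigma>) \<rho> ks)"
proof -
  have d: "0 < d" using assms(1) by simp
  note i = assms(4)
  have pr: "pos d n \<rho>" and tr: "otr d n \<rho> = 1" using density_pos[OF assms(5)] by auto
  have lk: "length ks = m" and sk: "set ks \<subseteq> Zdn d n" using assms(6) by (auto simp: seqs_def)
  have z: "vzero n \<in> Zdn d n" by (rule vzero_Zdn[OF d])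
  have "routine_prob d n M \<rho> m ks = Rf d n M \<rho> (vzero n) ks"
    unfolding routine_prob_def Rf_def lk
  proof (intro sum.cong refl)
    fix \<alpha> \<beta> os assume a: "\<alpha> \<in> seqs d n m" and b: "\<beta> \<in> seqs d n m" and o: "os \<in> seqs d n m"
    have "seqprob d n M \<rho> (vzero n) \<alpha> \<beta> os = otr d n (chain d n M (vzero n) \<rho> \<alpha> \<beta> os)"
      by (rule seqprob_chain[OF d i z _ _ _ _ pr tr]) (use a b o in \<open>auto simp: seqs_def\<close>)
    thus "(if map2 (vadd d) \<alpha> os = ks
          then (1 / of_nat d ^ (2 * n)) ^ m * seqprob d n M \<rho> (vzero n) \<alpha> \<beta> os else 0) =
        (if map2 (vadd d) \<alpha> os = ks
          then (1 / of_nat d ^ (2 * n)) ^ m * otr d n (chain d n M (vzero n) \<rho> \<alpha> \<beta> os) else 0)"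
      by simp
  qed
  also have "\<dots> = Tf d n M (conjop d n (Xop d n (vzero n)) \<rho>) ks"
    by (rule main_R[OF d i z sk])
  also have "\<dots> = Tf d n M \<rho> ks"
  proof (cases ks)
    case Nil thus ?thesis using lk assms(3) by simp
  next
    case (Cons k ks') thus ?thesis by (simp add: Tf_Cons Mhat_X0[OF d])
  qed
  finally show ?thesis by (simp add: Tf_def)
qed


end
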